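(* Let $h_{1},h_{2},f:\mathbb{C}\to\mathbb{C}$ be any functions, and let $a,b:\mathbb{C}\to\mathbb{C}$ be functions such that for all $x$ \[ b(x)=-h_{1}(x)h_{2}(x),\qquad f(x)a(x)=f(x-1)h_{1}(x)+f(x+1)h_{2}(x+1). \] Then the sequence $F_{n}=f(n)\cdot\prod_{k=1}^{n}h_{2}(k)$ solves the recurrence \[ F_{n-1}b(n)+F_{n}a(n)=F_{n+1}, \] and for every $n\ge 1$, \[ \mathbb{K}_{1}^{n}\frac{b(i)}{a(i)}=\frac{f(1)h_{2}(1)}{f(0)}\left(\frac{1}{\sum_{k=0}^{n}\frac{f(0)f(1)}{f(k)f(k+1)}\prod_{i=1}^{k}\left(\frac{h_{1}(i)}{h_{2}(i+1)}\right)}-1\right). \]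
   Context: For sequences $b_i,a_i$ of complex numbers, the finite continued fraction is \[ \mathbb{K}_{1}^{n}\frac{b_{i}}{a_{i}}:=\cfrac{b_{1}}{a_{1}+\cfrac{b_{2}}{a_{2}+\cfrac{b_{3}}{\ddots+\cfrac{b_{n}}{a_{n}+0}}}}\in\mathbb{C}\cup\{\infty\}, \] equivalently the image of $0$ under the composition of Möbius maps $z\mapsto \frac{b_1}{a_1+z}\circ\cdots\circ z\mapsto\frac{b_n}{a_n+z}$; here $\mathbb{K}_{1}^{n}\frac{b(i)}{a(i)}$ means $b_i=b(i)$, $a_i=a(i)$. *)

theory Defs
  imports Complex_Main
begin

text \<open>Extended complex plane \<open>\<complex> \<union> {\<infinity>}\<close> is modelled as \<open>complex option\<close>,
  with \<open>None\<close> standing for \<open>\<infinity>\<close>.\<close>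

text \<open>The Moebius map \<open>z \<mapsto> b/(a+z)\<close> acting on homogeneous coordinates
  \<open>z = p/q\<close>: \<open>(p,q) \<mapsto> (b q, a q + p)\<close>.\<close>
definition mob_hom :: "complex \<Rightarrow> complex \<Rightarrow> complex \<times> complex \<Rightarrow> complex \<times> complex" where
  "mob_hom b a pq = (b * snd pq, a * snd pq + fst pq)"

text \<open>Finite continued fraction \<open>K_1^n b_i/a_i\<close>: the image of \<open>0 = (0:1)\<close> under
  \<open>(z\<mapsto>b_1/(a_1+z)) \<circ> \<dots> \<circ> (z\<mapsto>b_n/(a_n+z))\<close>, returned in \<open>\<complex> \<union> {\<infinity>}\<close>.\<close>
definition cont_frac :: "(nat \<Rightarrow> complex) \<Rightarrow> (nat \<Rightarrow> complex) \<Rightarrow> nat \<Rightarrow> complex option" where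
  "cont_frac b a n =
     (let pq = foldr (\<lambda>i. mob_hom (b i) (a i)) [1..<n+1] (0, 1)
      in if snd pq = 0 then None else Some (fst pq / snd pq))"

end

theory Submission
  imports Defs
begin

fun rec3 :: "(nat \<Rightarrow> complex) \<Rightarrow> (nat \<Rightarrow> complex) \<Rightarrow> complex \<Rightarrow> complex \<Rightarrow> nat \<Rightarrow> complex" where
  "rec3 bb aa x0 x1 0 = x0"
| "rec3 bb aa x0 x1 (Suc 0) = x1"
| "rec3 bb aa x0 x1 (Suc (Suc n)) = bb (Suc n) * rec3 bb aa x0 x1 n + aa (Suc n) * rec3 bb aa x0 x1 (Suc n)"

lemma foldr_rec3:
  "foldr (\<lambda>i. mob_hom (bb i) (aa i)) [1..<n+1] (p,q) =
     (p * rec3 bb aa 1 0 n + q * rec3 bb aa 1 0 (Suc n),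
      p * rec3 bb aa 0 1 n + q * rec3 bb aa 0 1 (Suc n))"
proof (induction n arbitrary: p q)
  case 0
  then show ?case by simp
next
  case (Suc n)
  have "[1..<Suc n + 1] = [1..<n+1] @ [Suc n]" by simp
  then have "foldr (\<lambda>i. mob_hom (bb i) (aa i)) [1..<Suc n+1] (p,q)
     = foldr (\<lambda>i. mob_hom (bb i) (aa i)) [1..<n+1] (bb (Suc n) * q, aa (Suc n) * q + p)"
    by (simp add: mob_hom_def)
  also have "\<dots> = (bb (Suc n) * q * rec3 bb aa 1 0 n + (aa (Suc n) * q + p) * rec3 bb aa 1 0 (Suc n),
      bb (Suc n) * q * rec3 bb aa 0 1 n + (aa (Suc n) * q + p) * rec3 bb aa 0 1 (Suc n))"
    by (rule Suc.IH)
  finally show ?case by (simp add: algebra_simps)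
qed

lemma closed_form:
  fixes Y FF bb aa s :: "nat \<Rightarrow> complex"
  assumes rY: "\<And>m. m+2 \<le> L \<Longrightarrow> Y (m+2) = bb (m+1) * Y m + aa (m+1) * Y (m+1)"
    and rF: "\<And>m. m+2 \<le> L \<Longrightarrow> FF (m+2) = bb (m+1) * FF m + aa (m+1) * FF (m+1)"
    and ks: "\<And>m. m+2 \<le> L \<Longrightarrow> s (m+1) * FF (m+2) = - bb (m+1) * FF m * s m"
    and Y0: "Y 0 = FF 0 * (c * sum s {..<0} + d)"
    and Y1: "Y 1 = FF 1 * (c * sum s {..<1} + d)"
  shows "m \<le> L \<Longrightarrow> Y m = FF m * (c * sum s {..<m} + d)"
proof (induction m rule: less_induct)
  case (less m)
  show ?case
  proof (cases m)
    case 0 then show ?thesis using Y0 by simp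
  next
    case (Suc k)
    show ?thesis
    proof (cases k)
      case 0 then show ?thesis using Y1 Suc by simp
    next
      case (Suc j)
      have m: "m = j + 2" using Suc \<open>m = Suc k\<close> by simp
      have L: "j + 2 \<le> L" using less.prems m by simp
      have IH0: "Y j = FF j * (c * sum s {..<j} + d)" using less.IH[of j] m L by simp
      have IH1: "Y (j+1) = FF (j+1) * (c * sum s {..<j+1} + d)" using less.IH[of "j+1"] m L by simp
      have e1: "sum s {..<j+1} = sum s {..<j} + s j" by simp
      have e2: "sum s {..<j+2} = sum s {..<j} + s j + s (j+1)" by (simp add: numeral_2_eq_2)
      have "Y m = bb (j+1) * Y j + aa (j+1) * Y (j+1)" using rY[OF L] m by simp
      also have "\<dots> = (c * sum s {..<j} + d) * (bb (j+1) * FF j + aa (j+1) * FF (j+1))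
                      + c * aa (j+1) * FF (j+1) * s j"
        using IH0 IH1 e1 by (simp add: algebra_simps)
      also have "\<dots> = (c * sum s {..<j} + d) * FF (j+2) + c * s j * (FF (j+2) - bb (j+1) * FF j)"
        using rF[OF L] by (simp add: algebra_simps)
      also have "\<dots> = (c * sum s {..<j} + d) * FF (j+2) + c * s j * FF (j+2) + c * s (j+1) * FF (j+2)"
        using ks[OF L] by (simp add: algebra_simps)
      also have "\<dots> = FF m * (c * sum s {..<m} + d)" using m e2 by (simp add: algebra_simps)
      finally show ?thesis .
    qed
  qed
qed

theorem theorem1:
  fixes h1 h2 f a b :: "complex \<Rightarrow> complex"
  assumes hb: "\<And>x. b x = - h1 x * h2 x"
      and ha: "\<And>x. f x * a x = f (x - 1) * h1 x + f (x + 1) * h2 (x + 1)"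
  defines "F \<equiv> (\<lambda>n::nat. f (of_nat n) * (\<Prod>k=1..n. h2 (of_nat k)))"
  shows "(\<forall>n::nat. n \<ge> 1 \<longrightarrow>
            F (n - 1) * b (of_nat n) + F n * a (of_nat n) = F (n + 1))
       \<and> (\<forall>n::nat. n \<ge> 1
            \<longrightarrow> (\<forall>k\<in>{0..n+1}. f (of_nat k) \<noteq> 0)
            \<longrightarrow> (\<forall>k\<in>{1..n+1}. h2 (of_nat k) \<noteq> 0)
            \<longrightarrow> (let S = (\<Sum>k=0..n. f 0 * f 1 / (f (of_nat k) * f (of_nat k + 1))
                              * (\<Prod>i=1..k. h1 (of_nat i) / h2 (of_nat i + 1)))
                in cont_frac (\<lambda>i. b (of_nat i)) (\<lambda>i. a (of_nat i)) n
                   = (if S = 0 then None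
                      else Some (f 1 * h2 1 / f 0 * (1 / S - 1)))))"
proof -
  have rec: "F (m + 2) = b (of_nat (m+1)) * F m + a (of_nat (m+1)) * F (m+1)" for m
  proof -
    let ?P = "\<Prod>k=1..m. h2 (of_nat k)"
    have P1: "(\<Prod>k=1..m+1. h2 (of_nat k)) = h2 (of_nat (m+1)) * ?P"
      using prod.nat_ivl_Suc'[of 1 m "\<lambda>k. h2 (of_nat k)"] by simp
    have P2: "(\<Prod>k=1..m+2. h2 (of_nat k)) = h2 (of_nat (m+2)) * (h2 (of_nat (m+1)) * ?P)"
      using prod.nat_ivl_Suc'[of 1 "Suc m" "\<lambda>k. h2 (of_nat k)"] P1 by simp
    have F1: "F (m+1) = f (of_nat (m+1)) * (h2 (of_nat (m+1)) * ?P)" unfolding F_def using P1 by simp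
    have F2: "F (m+2) = f (of_nat (m+2)) * (h2 (of_nat (m+2)) * (h2 (of_nat (m+1)) * ?P))"
      unfolding F_def using P2 by simp
    have F0: "F m = f (of_nat m) * ?P" unfolding F_def by simp
    have e1: "(of_nat (m+1) :: complex) - 1 = of_nat m" by simp
    have e2: "(of_nat (m+1) :: complex) + 1 = of_nat (m+2)" by simp
    have A: "f (of_nat (m+1)) * a (of_nat (m+1)) = f (of_nat m) * h1 (of_nat (m+1)) + f (of_nat (m+2)) * h2 (of_nat (m+2))"
      using ha[of "of_nat (m+1)"] unfolding e1 e2 .
    have B: "b (of_nat (m+1)) = - h1 (of_nat (m+1)) * h2 (of_nat (m+1))" by (rule hb)
    have key: "\<And>(P::complex) x0 x1 x2 av bv g1 g2 hv.
       x1 * av = x0 * hv + x2 * g2 \<Longrightarrow> bv = - hv * g1 \<Longrightarrow>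
       x2 * (g2 * (g1 * P)) = bv * (x0 * P) + av * (x1 * (g1 * P))"
    proof -
      fix P x0 x1 x2 av bv g1 g2 hv :: complex
      assume h: "x1 * av = x0 * hv + x2 * g2" "bv = - hv * g1"
      have "bv * (x0 * P) + av * (x1 * (g1 * P)) = g1 * P * (x1 * av) - hv * g1 * x0 * P"
        using h(2) by (simp add: algebra_simps)
      also have "\<dots> = x2 * (g2 * (g1 * P))" using h(1) by (simp add: algebra_simps)
      finally show "x2 * (g2 * (g1 * P)) = bv * (x0 * P) + av * (x1 * (g1 * P))" by simp
    qed
    show ?thesis unfolding F0 F1 F2 by (rule key[OF A B])
  qed
  have part1: "\<forall>n::nat. n \<ge> 1 \<longrightarrow> F (n - 1) * b (of_nat n) + F n * a (of_nat n) = F (n + 1)"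
  proof (intro allI impI)
    fix n :: nat assume "n \<ge> 1"
    then obtain m where n: "n = m + 1" by (metis add.commute le_Suc_ex)
    show "F (n - 1) * b (of_nat n) + F n * a (of_nat n) = F (n + 1)"
      using rec[of m] n by (simp add: algebra_simps)
  qed
  have Fm0: "F m = f (of_nat m) * (\<Prod>k=1..m. h2 (of_nat k))" for m unfolding F_def by simp
  have Fm2: "F (m+2) = f (of_nat (m+2)) * (h2 (of_nat (m+2)) * (h2 (of_nat (m+1)) * (\<Prod>k=1..m. h2 (of_nat k))))" for m
  proof -
    have P1: "(\<Prod>k=1..m+1. h2 (of_nat k)) = h2 (of_nat (m+1)) * (\<Prod>k=1..m. h2 (of_nat k))"
      using prod.nat_ivl_Suc'[of 1 m "\<lambda>k. h2 (of_nat k)"] by simp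
    have P2: "(\<Prod>k=1..m+2. h2 (of_nat k)) = h2 (of_nat (m+2)) * (h2 (of_nat (m+1)) * (\<Prod>k=1..m. h2 (of_nat k)))"
      using prod.nat_ivl_Suc'[of 1 "Suc m" "\<lambda>k. h2 (of_nat k)"] P1 by simp
    show ?thesis unfolding F_def using P2 by simp
  qed
  have part2: "\<forall>n::nat. n \<ge> 1
            \<longrightarrow> (\<forall>k\<in>{0..n+1}. f (of_nat k) \<noteq> 0)
            \<longrightarrow> (\<forall>k\<in>{1..n+1}. h2 (of_nat k) \<noteq> 0)
            \<longrightarrow> (let S = (\<Sum>k=0..n. f 0 * f 1 / (f (of_nat k) * f (of_nat k + 1))
                              * (\<Prod>i=1..k. h1 (of_nat i) / h2 (of_nat i + 1)))
                in cont_frac (\<lambda>i. b (of_nat i)) (\<lambda>i. a (of_nat i)) n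
                   = (if S = 0 then None
                      else Some (f 1 * h2 1 / f 0 * (1 / S - 1))))"
  proof (intro allI impI)
    fix n :: nat
    assume n1: "n \<ge> 1" and hf: "\<forall>k\<in>{0..n+1}. f (of_nat k) \<noteq> 0"
      and hh: "\<forall>k\<in>{1..n+1}. h2 (of_nat k) \<noteq> 0"
    define s where "s = (\<lambda>k::nat. f 0 * f 1 / (f (of_nat k) * f (of_nat k + 1))
                              * (\<Prod>i=1..k. h1 (of_nat i) / h2 (of_nat i + 1)))"
    define S where "S = (\<Sum>k=0..n. f 0 * f 1 / (f (of_nat k) * f (of_nat k + 1))
                              * (\<Prod>i=1..k. h1 (of_nat i) / h2 (of_nat i + 1)))"
    have S: "S = sum s {..<n+1}" unfolding S_def s_def
      by (simp add: atLeast0AtMost lessThan_Suc_atMost)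
    define bb where "bb = (\<lambda>i::nat. b (of_nat i))"
    define aa where "aa = (\<lambda>i::nat. a (of_nat i))"
    have f0: "f 0 \<noteq> 0" using hf by force
    have f1: "f 1 \<noteq> 0" using hf[rule_format, of 1] by simp
    have h21: "h2 1 \<noteq> 0" using hh[rule_format, of 1] by simp
    have F1: "F 1 = f 1 * h2 1" unfolding F_def by simp
    have F1nz: "F 1 \<noteq> 0" using F1 f1 h21 by simp
    have F0: "F 0 = f 0" unfolding F_def by simp
    have s0: "s 0 = 1" unfolding s_def using f0 f1 by simp
    have Fnz: "F (n+1) \<noteq> 0"
    proof -
      have "(\<Prod>k=1..n+1. h2 (of_nat k)) \<noteq> 0" using hh by (subst prod_zero_iff) auto
      moreover have "f (of_nat (n+1)) \<noteq> 0" using hf[rule_format, of "n+1"] by simp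
      ultimately show ?thesis unfolding F_def by simp
    qed
    have rY: "\<And>m x0 x1. rec3 bb aa x0 x1 (m+2) = bb (m+1) * rec3 bb aa x0 x1 m + aa (m+1) * rec3 bb aa x0 x1 (m+1)"
      by (simp add: numeral_2_eq_2)
    have rF: "\<And>m. F (m+2) = bb (m+1) * F m + aa (m+1) * F (m+1)"
      unfolding aa_def bb_def by (rule rec)
    have ks: "s (m+1) * F (m+2) = - bb (m+1) * F m * s m" if m: "m+2 \<le> n+1" for m
    proof -
      have x0: "f (of_nat m) \<noteq> 0" using hf m by auto
      have x1: "f (of_nat (m+1)) \<noteq> 0" using hf[rule_format, of "m+1"] m by auto
      have x2: "f (of_nat (m+2)) \<noteq> 0" using hf[rule_format, of "m+2"] m by auto
      have g2: "h2 (of_nat (m+2)) \<noteq> 0" using hh[rule_format, of "m+2"] m by auto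
      have e2: "(of_nat (m+1) :: complex) + 1 = of_nat (m+2)" by simp
      have Q: "(\<Prod>i=1..m+1. h1 (of_nat i) / h2 (of_nat i + 1))
           = h1 (of_nat (m+1)) / h2 (of_nat (m+2)) * (\<Prod>i=1..m. h1 (of_nat i) / h2 (of_nat i + 1))"
        using prod.nat_ivl_Suc'[of 1 m "\<lambda>i. h1 (of_nat i) / h2 (of_nat i + 1)"] by (simp add: add_ac)
      have sm1: "s (m+1) = f 0 * f 1 / (f (of_nat (m+1)) * f (of_nat (m+2)))
            * (h1 (of_nat (m+1)) / h2 (of_nat (m+2)) * (\<Prod>i=1..m. h1 (of_nat i) / h2 (of_nat i + 1)))"
        unfolding s_def e2 Q by simp
      have sm: "s m = f 0 * f 1 / (f (of_nat m) * f (of_nat (m+1)))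
            * (\<Prod>i=1..m. h1 (of_nat i) / h2 (of_nat i + 1))"
      proof -
        have e1: "(of_nat m :: complex) + 1 = of_nat (m+1)" by simp
        show ?thesis by (simp only: s_def e1)
      qed
      have B: "bb (m+1) = - h1 (of_nat (m+1)) * h2 (of_nat (m+1))" unfolding bb_def by (rule hb)
      show ?thesis unfolding sm1 sm B Fm0 Fm2 using x0 x1 x2 g2
        by (simp add: field_simps)
    qed
    have cB: "rec3 bb aa 0 1 m = F m * (1 / F 1 * sum s {..<m} + 0)" if "m \<le> n+1" for m
      by (rule closed_form[where L="n+1", OF rY rF ks _ _ that])
         (use F1nz s0 in simp_all)
    have cA: "rec3 bb aa 1 0 m = F m * (- 1 / f 0 * sum s {..<m} + 1 / f 0)" if "m \<le> n+1" for m
      by (rule closed_form[where L="n+1", OF rY rF ks _ _ that])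
         (use F0 f0 s0 in simp_all)
    have cf: "cont_frac bb aa n = (if rec3 bb aa 0 1 (n+1) = 0 then None
            else Some (rec3 bb aa 1 0 (n+1) / rec3 bb aa 0 1 (n+1)))"
      unfolding cont_frac_def using foldr_rec3[of bb aa n 0 1] by simp
    have Bn: "rec3 bb aa 0 1 (n+1) = F (n+1) * S / F 1" using cB[of "n+1"] S by simp
    have An: "rec3 bb aa 1 0 (n+1) = F (n+1) * (1 - S) / f 0" 
    proof -
      have "rec3 bb aa 1 0 (n+1) = F (n+1) * (- 1 / f 0 * S + 1 / f 0)" using cA[of "n+1"] S by simp
      also have "\<dots> = F (n+1) * (1 - S) / f 0" using f0 by (simp add: field_simps)
      finally show ?thesis .
    qed
    have "cont_frac bb aa n = (if S = 0 then None else Some (f 1 * h2 1 / f 0 * (1 / S - 1)))"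
    proof (cases "S = 0")
      case True then show ?thesis using cf Bn by simp
    next
      case False
      have "rec3 bb aa 1 0 (n+1) / rec3 bb aa 0 1 (n+1) = f 1 * h2 1 / f 0 * (1 / S - 1)"
        unfolding An Bn F1 using False Fnz f0 F1nz[unfolded F1] by (simp add: field_simps)
      then show ?thesis using cf Bn False Fnz F1nz by simp
    qed
    then show "let S = (\<Sum>k=0..n. f 0 * f 1 / (f (of_nat k) * f (of_nat k + 1))
                              * (\<Prod>i=1..k. h1 (of_nat i) / h2 (of_nat i + 1)))
                in cont_frac (\<lambda>i. b (of_nat i)) (\<lambda>i. a (of_nat i)) n
                   = (if S = 0 then None
                      else Some (f 1 * h2 1 / f 0 * (1 / S - 1)))"
      unfolding S_def bb_def aa_def Let_def .
  qed
  show ?thesis using part1 part2 by blast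
qed
end
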